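(* Assume the light-tailed noise condition holds with constants $\bar p,\sigma_0>0$, $\max(\|f_0\|_\infty,\|g_0\|_\infty)\le M_0$, and $\tau\ge c_9=2\max\{4M_0,\sigma_0(\log4)^{1/2}\}$. Then for all measurable $f,g:[0,1]^d\to[-M_0,M_0]$, $$\mathcal R_\tau(f,g)-\mathcal R_\tau(f,g_0)\ge\frac{\alpha^2}4\|g-g_0\|_2^2-\alpha\|g-g_0\|_2\Big(\frac{\bar p}2\|f-f_0\|_4^2+c_{17}e^{-\tau^2/(2\sigma_0^2)}\Big)$$ and $$\mathcal R_\tau(f,g)-\mathcal R_\tau(f,g_0)\le\frac{\alpha^2}2\|g-g_0\|_2^2+\alpha\|g-g_0\|_2\Big(\frac{\bar p}2\|f-f_0\|_4^2+c_{17}e^{-\tau^2/(2\sigma_0^2)}\Big),$$ where $c_{17}=4M_0+2\sigma_0$.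
   Context: $(Y,X)\in\mathbb R\times[0,1]^d$, $X\sim P_X$; $\alpha\in(0,1)$; $f_0$ satisfies $\mathbb P(Y\le f_0(X)\mid X=x)=\alpha$ and $g_0(x)=\alpha^{-1}\mathbb E[Y\mathbb 1\{Y\le f_0(X)\}\mid X=x]$. $\epsilon=Y-f_0(X)$, $\epsilon_-=\min(\epsilon,0)$, $\omega=\epsilon_--\mathbb E(\epsilon_-\mid X)$. Surrogate $Z(f)=\min\{Y-f(X),0\}+\alpha f(X)$. Huber loss $\ell_\tau(u)=\tfrac12u^2\mathbb 1(|u|\le\tau)+(\tau|u|-\tau^2/2)\mathbb 1(|u|>\tau)$ and $\mathcal R_\tau(f,g)=\mathbb E\,\ell_\tau(Z(f)-\alpha g(X))$. $\|h\|_q=(\mathbb E|h(X)|^q)^{1/q}$. Light-tailed noise condition: the conditional density $p_{\epsilon|X}$ exists with $\sup_up_{\epsilon|X}(u)\le\bar p$ a.s., and $\mathbb E[e^{\omega^2/\sigma_0^2}\mid X]\le2$ a.s. *)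

theory Defs
  imports "HOL-Probability.Probability"
begin

definition huber :: "real \<Rightarrow> real \<Rightarrow> real" where
  "huber \<tau> u = (if \<bar>u\<bar> \<le> \<tau> then u\<^sup>2 / 2 else \<tau> * \<bar>u\<bar> - \<tau>\<^sup>2 / 2)"

definition Zsur :: "real \<Rightarrow> ('x \<Rightarrow> real) \<Rightarrow> real \<Rightarrow> 'x \<Rightarrow> real" where
  "Zsur \<alpha> f y x = min (y - f x) 0 + \<alpha> * f x"

text \<open>The joint law of (Y,X) is given by the marginal PX of X and the
  conditional law K x of Y given X = x (a Markov kernel).
  Huber risk R_tau(f,g) = E l_tau(Z(f) - alpha g(X)).\<close>
definition risk :: "'x measure \<Rightarrow> ('x \<Rightarrow> real measure) \<Rightarrow> real \<Rightarrow> real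
    \<Rightarrow> ('x \<Rightarrow> real) \<Rightarrow> ('x \<Rightarrow> real) \<Rightarrow> real" where
  "risk PX K \<alpha> \<tau> f g =
     (\<integral>x. (\<integral>y. huber \<tau> (Zsur \<alpha> f y x - \<alpha> * g x) \<partial>K x) \<partial>PX)"

definition Lq_norm :: "'x measure \<Rightarrow> real \<Rightarrow> ('x \<Rightarrow> real) \<Rightarrow> real" where
  "Lq_norm PX q h = (\<integral>x. \<bar>h x\<bar> powr q \<partial>PX) powr (1 / q)"

definition unit_cube :: "(real ^ 'd) set" where
  "unit_cube = {x. \<forall>i. 0 \<le> x $ i \<and> x $ i \<le> 1}"

end

theory Submission
  imports Defs
begin

definition psi :: "real \<Rightarrow> real \<Rightarrow> real" where "psi \<tau> u = max (-\<tau>) (min \<tau> u)"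
lemma huber_lu: assumes "0 < \<tau>" shows "0 \<le> huber \<tau> (u-d) - huber \<tau> u + d * psi \<tau> u \<and> huber \<tau> (u-d) - huber \<tau> u + d * psi \<tau> u \<le> d\<^sup>2/2"
proof -
  define v where "v = u - d"
  have d: "d = u - v" by (simp add: v_def)
  have s: "0 \<le> (v-\<tau>)^2" "0 \<le> (v+\<tau>)^2" "0 \<le> (u-v)^2" "0 \<le> (u-v-2*\<tau>)^2" "0 \<le> (u-v+2*\<tau>)^2" by auto
  have h: "u \<le> \<tau> \<Longrightarrow> \<tau> \<le> v \<Longrightarrow> 0 \<le> (\<tau>-u)*(2* v-u-\<tau>)"
    "-\<tau> \<le> u \<Longrightarrow> v \<le> -\<tau> \<Longrightarrow> 0 \<le> (\<tau> + u) * (u - \<tau> - 2* v)"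
    "\<tau> \<le> u \<Longrightarrow> v \<le> \<tau> \<Longrightarrow> 0 \<le> (u-\<tau>)*(u+\<tau>-2* v)"
    "u \<le> -\<tau> \<Longrightarrow> -\<tau> \<le> v \<Longrightarrow> 0 \<le> (-u-\<tau>)*(-u+\<tau>+2* v)"
    "\<tau> \<le> u \<Longrightarrow> 0 \<le> \<tau>*(u-\<tau>)" "u \<le> -\<tau> \<Longrightarrow> 0 \<le> \<tau>*(-u-\<tau>)"
    "v \<le> 0 \<Longrightarrow> 0 \<le> \<tau>*(-v)" "0 \<le> v \<Longrightarrow> 0 \<le> \<tau>* v"
    using assms by (auto intro!: mult_nonneg_nonneg simp: mult_nonneg_nonpos)
  show ?thesis unfolding d using assms s h unfolding huber_def psi_def
    by (auto simp: power2_eq_square field_simps abs_if split: if_splits)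
qed
lemma huber_exact: assumes "0 < \<tau>" "\<bar>u\<bar> \<le> \<tau> - \<bar>d\<bar>" shows "huber \<tau> (u-d) - huber \<tau> u + d * psi \<tau> u = d\<^sup>2/2"
  using assms unfolding huber_def psi_def
  by (auto simp: power2_eq_square field_simps abs_if split: if_splits)
lemma sg_bound:
  fixes \<mu> :: "real measure" and w \<phi> :: "real \<Rightarrow> real"
  assumes w[measurable]: "w \<in> borel_measurable \<mu>"
    and sg: "(\<integral>\<^sup>+ y. ennreal (exp ((w y)\<^sup>2 / s\<^sup>2)) \<partial>\<mu>) \<le> 2"
    and phi[measurable]: "\<phi> \<in> borel_measurable \<mu>"
    and nn: "\<And>y. 0 \<le> \<phi> y" and le: "\<And>y. \<phi> y \<le> A * exp ((w y)\<^sup>2 / s\<^sup>2)"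
  shows "integrable \<mu> \<phi> \<and> integral\<^sup>L \<mu> \<phi> \<le> 2 * A"
proof -
  have A: "0 \<le> A" using le[of 0] nn[of 0] by (metis exp_gt_zero less_le_not_le mult_less_0_iff not_le_imp_less order_trans)
  have "(\<integral>\<^sup>+ y. ennreal (\<phi> y) \<partial>\<mu>) \<le> (\<integral>\<^sup>+ y. ennreal A * ennreal (exp ((w y)\<^sup>2 / s\<^sup>2)) \<partial>\<mu>)"
  proof (rule nn_integral_mono)
    fix y
    have "ennreal (\<phi> y) \<le> ennreal (A * exp ((w y)\<^sup>2 / s\<^sup>2))" using le by (rule ennreal_leI)
    also have "\<dots> = ennreal A * ennreal (exp ((w y)\<^sup>2 / s\<^sup>2))" using A by (rule ennreal_mult) simp
    finally show "ennreal (\<phi> y) \<le> ennreal A * ennreal (exp ((w y)\<^sup>2 / s\<^sup>2))" .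
  qed
  also have "\<dots> = ennreal A * (\<integral>\<^sup>+ y. ennreal (exp ((w y)\<^sup>2 / s\<^sup>2)) \<partial>\<mu>)"
    by (rule nn_integral_cmult) measurable
  also have "\<dots> \<le> ennreal A * 2" using sg by (rule mult_left_mono) simp
  also have "\<dots> = ennreal (2 * A)" using A by (simp add: ennreal_mult mult.commute)
  finally have I: "(\<integral>\<^sup>+ y. ennreal (\<phi> y) \<partial>\<mu>) \<le> ennreal (2 * A)" .
  have int: "integrable \<mu> \<phi>"
  proof (rule integrableI_bounded)
    have "(\<integral>\<^sup>+ y. ennreal (norm (\<phi> y)) \<partial>\<mu>) = (\<integral>\<^sup>+ y. ennreal (\<phi> y) \<partial>\<mu>)" using nn by simp
    also have "\<dots> < \<infinity>" using I by (rule le_less_trans) simp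
    finally show "(\<integral>\<^sup>+ y. ennreal (norm (\<phi> y)) \<partial>\<mu>) < \<infinity>" .
  qed simp
  moreover have "ennreal (integral\<^sup>L \<mu> \<phi>) \<le> ennreal (2 * A)"
    using I nn_integral_eq_integral[OF int] nn by simp
  then have "integral\<^sup>L \<mu> \<phi> \<le> 2 * A" using A by (simp add: ennreal_le_iff)
  ultimately show ?thesis by simp
qed
lemma kappa_integral:
  fixes h :: real
  shows "(\<integral>\<^sup>+ t. ennreal (if 0 \<le> h then (h - t) * indicator {0..h} t else (t - h) * indicator {h..0} t) \<partial>lborel) = ennreal (h\<^sup>2 / 2)"
proof (cases "0 \<le> h")
  case True
  have "(\<integral>\<^sup>+ t. ennreal (h - t) * indicator {0..h} t \<partial>lborel) = ennreal ((h * h - h\<^sup>2/2) - (h * 0 - 0\<^sup>2/2))"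
    by (rule nn_integral_FTC_Icc[where F="\<lambda>t. h * t - t\<^sup>2/2"]) (auto intro!: derivative_eq_intros simp: True)
  moreover have "\<And>t. ennreal (if 0 \<le> h then (h - t) * indicator {0..h} t else (t - h) * indicator {h..0} t) = ennreal (h - t) * indicator {0..h} t"
    using True by (simp split: split_indicator)
  ultimately show ?thesis by (simp add: power2_eq_square)
next
  case False
  have "(\<integral>\<^sup>+ t. ennreal (t - h) * indicator {h..0} t \<partial>lborel) = ennreal ((0\<^sup>2/2 - h * 0) - (h\<^sup>2/2 - h * h))"
    by (rule nn_integral_FTC_Icc[where F="\<lambda>t. t\<^sup>2/2 - h * t"]) (use False in \<open>auto intro!: derivative_eq_intros\<close>)
  moreover have "\<And>t. ennreal (if 0 \<le> h then (h - t) * indicator {0..h} t else (t - h) * indicator {h..0} t) = ennreal (t - h) * indicator {h..0} t"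
    using False by (simp split: split_indicator)
  ultimately show ?thesis by (simp add: power2_eq_square)
qed
lemma mean_bound:
  fixes \<mu> :: "real measure" and p :: "real \<Rightarrow> real"
  assumes P: "prob_space \<mu>" and S: "sets \<mu> = sets borel"
    and pm: "p \<in> borel_measurable borel" and pb: "\<And>u. 0 \<le> p u \<and> p u \<le> pbar"
    and D: "distr \<mu> borel (\<lambda>y. y - c) = density lborel (\<lambda>u. ennreal (p u))"
  shows "integrable \<mu> (\<lambda>y. min (y - c - h) 0 - min (y - c) 0 + h * indicator {y. y \<le> c} y)
     \<and> \<bar>\<integral>y. min (y - c - h) 0 - min (y - c) 0 + h * indicator {y. y \<le> c} y \<partial>\<mu>\<bar> \<le> pbar/2 * h\<^sup>2"
proof -
  interpret prob_space \<mu> by (rule P)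
  note S[measurable_cong]
  note pm[measurable]
  define Q where "Q t = min (t - h) 0 - min t 0 + h * indicator {..0::real} t" for t
  define \<kappa> where "\<kappa> t = (if 0 \<le> h then (h - t) * indicator {0..h} t else (t - h) * indicator {h..0} t)" for t
  have Qm[measurable]: "Q \<in> borel_measurable borel" unfolding Q_def by measurable
  have km[measurable]: "\<kappa> \<in> borel_measurable borel" unfolding \<kappa>_def by measurable
  have qQ: "\<And>y. min (y - c - h) 0 - min (y - c) 0 + h * indicator {y. y \<le> c} y = Q (y - c)"
    unfolding Q_def by (simp split: split_indicator)
  have Qk: "\<bar>Q t\<bar> \<le> \<kappa> t" for t unfolding Q_def \<kappa>_def by (auto split: split_indicator)
  have Qb: "\<bar>Q t\<bar> \<le> 2*\<bar>h\<bar>" for t unfolding Q_def by (auto split: split_indicator)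
  have pbar: "0 \<le> pbar" using pb[of 0] by linarith
  have "(\<integral>\<^sup>+y. ennreal \<bar>Q (y - c)\<bar> \<partial>\<mu>) = (\<integral>\<^sup>+t. ennreal \<bar>Q t\<bar> \<partial>distr \<mu> borel (\<lambda>y. y - c))"
    by (subst nn_integral_distr) auto
  also have "\<dots> = (\<integral>\<^sup>+t. ennreal (p t) * ennreal \<bar>Q t\<bar> \<partial>lborel)" unfolding D
    by (subst nn_integral_density) auto
  also have "\<dots> \<le> (\<integral>\<^sup>+t. ennreal pbar * ennreal (\<kappa> t) \<partial>lborel)"
    by (intro nn_integral_mono mult_mono ennreal_leI) (auto simp: pb Qk)
  also have "\<dots> = ennreal pbar * ennreal (h\<^sup>2/2)"
    by (subst nn_integral_cmult) (auto simp: kappa_integral[of h] \<kappa>_def)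
  also have "\<dots> = ennreal (pbar/2*h\<^sup>2)"
    by (subst ennreal_mult[symmetric]) (auto simp: pbar)
  finally have I: "(\<integral>\<^sup>+y. ennreal \<bar>Q (y - c)\<bar> \<partial>\<mu>) \<le> ennreal (pbar/2*h\<^sup>2)" .
  have int: "integrable \<mu> (\<lambda>y. Q (y - c))"
    by (rule integrable_const_bound[where B="2*\<bar>h\<bar>"]) (auto simp: Qb)
  have "ennreal (norm (\<integral>y. Q (y - c) \<partial>\<mu>)) \<le> (\<integral>\<^sup>+y. norm (Q (y - c)) \<partial>\<mu>)"
    by (rule integral_norm_bound_ennreal[OF int])
  also have "\<dots> \<le> ennreal (pbar/2*h\<^sup>2)" using I by simp
  finally have "\<bar>\<integral>y. Q (y - c) \<partial>\<mu>\<bar> \<le> pbar/2*h\<^sup>2" using pbar by (simp add: ennreal_le_iff)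
  then show ?thesis using int unfolding qQ by simp
qed
lemma huber_measurable[measurable]: assumes [measurable]: "f \<in> borel_measurable M" shows "(\<lambda>x. huber t (f x)) \<in> borel_measurable M"
  unfolding huber_def by measurable
lemma psi_measurable[measurable]: assumes [measurable]: "f \<in> borel_measurable M" shows "(\<lambda>x. psi t (f x)) \<in> borel_measurable M"
  unfolding psi_def by measurable
lemma huber_nonneg: assumes t: "0 \<le> t" shows "0 \<le> huber t u"
proof -
  have "\<bar>u\<bar> > t \<Longrightarrow> t * t \<le> t * \<bar>u\<bar>" using t by (intro mult_left_mono) auto
  moreover have "0 \<le> t * \<bar>u\<bar>" using t by simp
  ultimately show ?thesis unfolding huber_def by (auto simp: power2_eq_square)
qed
lemma huber_le_abs: assumes t: "0 \<le> t" shows "huber t u \<le> t * \<bar>u\<bar>"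
proof -
  have "u\<^sup>2 / 2 \<le> t * \<bar>u\<bar>" if "\<bar>u\<bar> \<le> t"
  proof -
    have "u\<^sup>2 = \<bar>u\<bar> * \<bar>u\<bar>" by (simp add: power2_eq_square)
    also have "\<dots> \<le> t * \<bar>u\<bar>" using that by (intro mult_right_mono) auto
    finally have "u\<^sup>2 \<le> t * \<bar>u\<bar>" .
    moreover have "0 \<le> t * \<bar>u\<bar>" using t by simp
    ultimately show ?thesis by linarith
  qed
  moreover have "0 \<le> t\<^sup>2" by simp
  ultimately show ?thesis unfolding huber_def by auto
qed
lemma psi_abs: "0 \<le> t \<Longrightarrow> \<bar>psi t u\<bar> \<le> t" unfolding psi_def by auto
lemma psi_diff: "0 \<le> t \<Longrightarrow> \<bar>u - psi t u\<bar> \<le> max 0 (\<bar>u\<bar> - t)" unfolding psi_def by auto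
lemma r_bound: assumes "0 < a" "a < 1" shows "\<bar>min (e - h) 0 - min e 0 + a * h\<bar> \<le> \<bar>(h::real)\<bar>"
proof (cases "0 \<le> h")
  case True
  have "0 \<le> a * h" "a * h \<le> h" using True assms by (auto intro: mult_left_le_one_le)
  then show ?thesis using True by linarith
next
  case False
  have "a * h \<le> 0" using False assms by (simp add: mult_le_0_iff)
  moreover have "h \<le> a * h" using False assms by (simp add: mult_le_cancel_right1)
  ultimately show ?thesis using False by linarith
qed
lemma perx:
  fixes \<mu> :: "real measure" and a f0v g0v fv gv pbar \<sigma> M0 \<tau> :: real
  assumes P: "prob_space \<mu>" and S: "sets \<mu> = sets borel"
   and a: "0 < a" "a < 1"
   and q: "measure \<mu> {y. y \<le> f0v} = a"
   and g0: "g0v = (1 / a) * (\<integral>y. y * indicator {y. y \<le> f0v} y \<partial>\<mu>)"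
   and pbar: "0 < pbar" and sig: "0 < \<sigma>"
   and dens: "\<exists>p :: real \<Rightarrow> real. p \<in> borel_measurable borel
                    \<and> (\<forall>u. 0 \<le> p u \<and> p u \<le> pbar)
                    \<and> distr \<mu> borel (\<lambda>y. y - f0v) = density lborel (\<lambda>u. ennreal (p u))"
   and ei: "integrable \<mu> (\<lambda>y. min (y - f0v) 0)"
   and sg: "(\<integral>\<^sup>+ y. ennreal (exp ((min (y - f0v) 0 - (\<integral>z. min (z - f0v) 0 \<partial>\<mu>))\<^sup>2 / \<sigma>\<^sup>2)) \<partial>\<mu>) \<le> 2"
   and bds: "\<bar>f0v\<bar> \<le> M0" "\<bar>g0v\<bar> \<le> M0" "\<bar>fv\<bar> \<le> M0" "\<bar>gv\<bar> \<le> M0"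
   and tau: "\<tau> \<ge> 2 * max (4 * M0) (\<sigma> * sqrt (ln 4))"
  shows "integrable \<mu> (\<lambda>y. huber \<tau> (min (y - fv) 0 + a * fv - a * gv))"
    and "0 \<le> (\<integral>y. huber \<tau> (min (y - fv) 0 + a * fv - a * gv) \<partial>\<mu>)"
    and "(\<integral>y. huber \<tau> (min (y - fv) 0 + a * fv - a * gv) \<partial>\<mu>) \<le> \<tau> * (2 * \<sigma> + 4 * M0)"
    and "(a * (gv - g0v))\<^sup>2 / 4 - \<bar>a * (gv - g0v)\<bar> * (pbar / 2 * (fv - f0v)\<^sup>2 + (4 * M0 + 2 * \<sigma>) * exp (- \<tau>\<^sup>2 / (2 * \<sigma>\<^sup>2)))
          \<le> (\<integral>y. huber \<tau> (min (y - fv) 0 + a * fv - a * gv) \<partial>\<mu>) - (\<integral>y. huber \<tau> (min (y - fv) 0 + a * fv - a * g0v) \<partial>\<mu>)"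
    and "(\<integral>y. huber \<tau> (min (y - fv) 0 + a * fv - a * gv) \<partial>\<mu>) - (\<integral>y. huber \<tau> (min (y - fv) 0 + a * fv - a * g0v) \<partial>\<mu>)
          \<le> (a * (gv - g0v))\<^sup>2 / 2 + \<bar>a * (gv - g0v)\<bar> * (pbar / 2 * (fv - f0v)\<^sup>2 + (4 * M0 + 2 * \<sigma>) * exp (- \<tau>\<^sup>2 / (2 * \<sigma>\<^sup>2)))"
proof -
  interpret prob_space \<mu> by (rule P)
  note S[measurable_cong]
  note ps1[simp] = prob_space
  have spU: "space \<mu> = UNIV" using sets_eq_imp_space_eq[OF S] by simp
  obtain p where pm: "p \<in> borel_measurable borel" and pb: "\<And>u. 0 \<le> p u \<and> p u \<le> pbar"
    and D: "distr \<mu> borel (\<lambda>y. y - f0v) = density lborel (\<lambda>u. ennreal (p u))" using dens by blast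
  define m where "m = (\<integral>z. min (z - f0v) 0 \<partial>\<mu>)"
  define \<omega> where "\<omega> y = min (y - f0v) 0 - m" for y
  define h where "h = fv - f0v"
  define \<delta> where "\<delta> = a * (gv - g0v)"
  define u where "u y = min (y - fv) 0 + a * fv - a * g0v" for y
  define s where "s = 3 * \<tau> / 4"
  define B where "B = pbar / 2 * (fv - f0v)\<^sup>2 + (4 * M0 + 2 * \<sigma>) * exp (- \<tau>\<^sup>2 / (2 * \<sigma>\<^sup>2))"
  have \<omega>m[measurable]: "\<omega> \<in> borel_measurable \<mu>" unfolding \<omega>_def by measurable
  have um[measurable]: "u \<in> borel_measurable \<mu>" unfolding u_def by measurable
  have M0: "0 \<le> M0" using bds by linarith
  have ln4: "1 \<le> ln (4::real)" by (subst ln_ge_iff) (use exp_le in auto)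
  have sq: "1 \<le> sqrt (ln (4::real))" using ln4 by simp
  have tau1: "8 * M0 \<le> \<tau>" "2 * (\<sigma> * sqrt (ln 4)) \<le> \<tau>" using tau by auto
  have "2 * \<sigma> \<le> 2 * (\<sigma> * sqrt (ln 4))" using sq sig by simp
  then have tau2: "2 * \<sigma> \<le> \<tau>" using tau1 by linarith
  have taupos: "0 < \<tau>" using tau2 sig by linarith
  have hb: "\<bar>h\<bar> \<le> 2 * M0" unfolding h_def using bds by linarith
  have "\<bar>\<delta>\<bar> = a * \<bar>gv - g0v\<bar>" unfolding \<delta>_def using a by (simp add: abs_mult)
  also have "\<dots> \<le> \<bar>gv - g0v\<bar>" using a by (intro mult_left_le_one_le) auto
  finally have \<delta>b: "\<bar>\<delta>\<bar> \<le> 2 * M0" using bds by linarith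
  have Bdef: "B = pbar / 2 * h\<^sup>2 + (4 * M0 + 2 * \<sigma>) * exp (- \<tau>\<^sup>2 / (2 * \<sigma>\<^sup>2))" unfolding B_def h_def ..
  have indint: "integrable \<mu> (\<lambda>y. c * indicator {y. y \<le> f0v} y)" for c :: real
    by (intro integrable_mult_right integrable_real_indicator) (auto simp: S less_top[symmetric])
  have indI: "(\<integral>y. c * indicator {y. y \<le> f0v} y \<partial>\<mu>) = c * a" for c :: real
    using q by (simp add: spU)
  have m_eq: "m = a * (g0v - f0v)"
  proof -
    have "(\<integral>y. y * indicator {y. y \<le> f0v} y \<partial>\<mu>) = (\<integral>y. min (y - f0v) 0 + f0v * indicator {y. y \<le> f0v} y \<partial>\<mu>)"
      by (rule Bochner_Integration.integral_cong) (auto split: split_indicator)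
    also have "\<dots> = (\<integral>y. min (y - f0v) 0 \<partial>\<mu>) + (\<integral>y. f0v * indicator {y. y \<le> f0v} y \<partial>\<mu>)"
      by (rule Bochner_Integration.integral_add[OF ei indint])
    also have "\<dots> = m + f0v * a" unfolding m_def indI ..
    finally show ?thesis using g0 a by (simp add: field_simps)
  qed
  have sg\<omega>: "(\<integral>\<^sup>+ y. ennreal (exp ((\<omega> y)\<^sup>2 / \<sigma>\<^sup>2)) \<partial>\<mu>) \<le> 2"
    using sg unfolding \<omega>_def m_def .
  have u\<omega>: "\<bar>u y - \<omega> y\<bar> \<le> \<bar>h\<bar>" for y
  proof -
    have "u y - \<omega> y = min ((y - f0v) - h) 0 - min (y - f0v) 0 + a * h"
      unfolding u_def \<omega>_def m_eq h_def by (simp add: algebra_simps)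
    then show ?thesis using r_bound[OF a] by simp
  qed
  have tail: "measure \<mu> {y. \<tau> / 2 < \<bar>\<omega> y\<bar>} \<le> 1 / 2"
  proof -
    define A where "A = exp (- (\<tau> / 2)\<^sup>2 / \<sigma>\<^sup>2)"
    have "integrable \<mu> (indicator {y. \<tau> / 2 < \<bar>\<omega> y\<bar>} :: real \<Rightarrow> real) \<and> integral\<^sup>L \<mu> (indicator {y. \<tau> / 2 < \<bar>\<omega> y\<bar>}) \<le> 2 * A"
    proof (rule sg_bound[OF \<omega>m sg\<omega>])
      show "(indicator {y. \<tau> / 2 < \<bar>\<omega> y\<bar>} :: real \<Rightarrow> real) \<in> borel_measurable \<mu>" by measurable
      show "0 \<le> (indicator {y. \<tau> / 2 < \<bar>\<omega> y\<bar>} y :: real)" for y by simp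
      show "indicator {y. \<tau> / 2 < \<bar>\<omega> y\<bar>} y \<le> A * exp ((\<omega> y)\<^sup>2 / \<sigma>\<^sup>2)" for y
      proof (cases "\<tau> / 2 < \<bar>\<omega> y\<bar>")
        case True
        have "(\<tau> / 2)\<^sup>2 \<le> \<bar>\<omega> y\<bar>\<^sup>2" using True taupos by (intro power_mono) auto
        then have "(\<tau> / 2)\<^sup>2 \<le> (\<omega> y)\<^sup>2" by simp
        then have "(\<tau> / 2)\<^sup>2 / \<sigma>\<^sup>2 \<le> (\<omega> y)\<^sup>2 / \<sigma>\<^sup>2" by (rule divide_right_mono) simp
        then have "0 \<le> - (\<tau> / 2)\<^sup>2 / \<sigma>\<^sup>2 + (\<omega> y)\<^sup>2 / \<sigma>\<^sup>2" by simp
        then have "1 \<le> A * exp ((\<omega> y)\<^sup>2 / \<sigma>\<^sup>2)" unfolding A_def by (simp add: exp_add[symmetric])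
        then show ?thesis using True by simp
      qed (simp add: A_def)
    qed
    then have "measure \<mu> {y. \<tau> / 2 < \<bar>\<omega> y\<bar>} \<le> 2 * A" by (simp add: spU)
    moreover have "A \<le> 1 / 4"
    proof -
      have "(2 * (\<sigma> * sqrt (ln 4)))\<^sup>2 \<le> \<tau>\<^sup>2" using tau1 sig by (intro power_mono) auto
      then have "4 * \<sigma>\<^sup>2 * ln 4 \<le> \<tau>\<^sup>2" by (simp add: power_mult_distrib)
      then have "ln 4 \<le> (\<tau> / 2)\<^sup>2 / \<sigma>\<^sup>2" using sig by (simp add: field_simps)
      then have "A \<le> exp (- ln 4)" unfolding A_def by simp
      also have "\<dots> = 1 / 4" by (simp add: exp_minus)
      finally show ?thesis .
    qed
    ultimately show ?thesis by simp
  qed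
  have bias: "integrable \<mu> (\<lambda>y. max 0 (\<bar>\<omega> y\<bar> - s)) \<and> (\<integral>y. max 0 (\<bar>\<omega> y\<bar> - s) \<partial>\<mu>) \<le> (4 * M0 + 2 * \<sigma>) * exp (- \<tau>\<^sup>2 / (2 * \<sigma>\<^sup>2))"
  proof -
    define A where "A = \<sigma>\<^sup>2 / (2 * s) * exp (- s\<^sup>2 / \<sigma>\<^sup>2)"
    have spos: "0 < s" unfolding s_def using taupos by simp
    have "integrable \<mu> (\<lambda>y. max 0 (\<bar>\<omega> y\<bar> - s)) \<and> (\<integral>y. max 0 (\<bar>\<omega> y\<bar> - s) \<partial>\<mu>) \<le> 2 * A"
    proof (rule sg_bound[OF \<omega>m sg\<omega>])
      show "(\<lambda>y. max 0 (\<bar>\<omega> y\<bar> - s)) \<in> borel_measurable \<mu>" by measurable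
      show "0 \<le> max 0 (\<bar>\<omega> y\<bar> - s)" for y by simp
      show "max 0 (\<bar>\<omega> y\<bar> - s) \<le> A * exp ((\<omega> y)\<^sup>2 / \<sigma>\<^sup>2)" for y
      proof (cases "s < \<bar>\<omega> y\<bar>")
        case True
        define w where "w = \<bar>\<omega> y\<bar>"
        have w2: "(\<omega> y)\<^sup>2 = w\<^sup>2" unfolding w_def by simp
        define x where "x = (w\<^sup>2 - s\<^sup>2) / \<sigma>\<^sup>2"
        have "x \<le> exp x" using exp_ge_add_one_self[of x] by linarith
        have "w - s \<le> (w\<^sup>2 - s\<^sup>2) / (2 * s)"
        proof -
          have "(w - s) * (2 * s) \<le> (w - s) * (w + s)" using True spos unfolding w_def
            by (intro mult_left_mono) auto
          then show ?thesis using spos by (simp add: field_simps power2_eq_square)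
        qed
        also have "\<dots> = \<sigma>\<^sup>2 / (2 * s) * x" unfolding x_def using sig spos by (simp add: field_simps)
        also have "\<dots> \<le> \<sigma>\<^sup>2 / (2 * s) * exp x" using \<open>x \<le> exp x\<close> spos by (intro mult_left_mono) auto
        also have "\<dots> = A * exp ((\<omega> y)\<^sup>2 / \<sigma>\<^sup>2)"
        proof -
          have "exp x = exp (- s\<^sup>2 / \<sigma>\<^sup>2) * exp ((\<omega> y)\<^sup>2 / \<sigma>\<^sup>2)"
            unfolding x_def w2 by (subst exp_add[symmetric]) (rule arg_cong[where f=exp], simp add: diff_divide_distrib)
          then show ?thesis unfolding A_def by simp
        qed
        finally show ?thesis using True unfolding w_def by simp
      next
        case False
        have "0 \<le> A" unfolding A_def using spos by simp
        then show ?thesis using False by simp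
      qed
    qed
    moreover have "2 * A \<le> (4 * M0 + 2 * \<sigma>) * exp (- \<tau>\<^sup>2 / (2 * \<sigma>\<^sup>2))"
    proof -
      have "\<sigma>\<^sup>2 / s \<le> 2 * \<sigma>" using tau2 sig spos unfolding s_def by (simp add: field_simps power2_eq_square)
      also have "\<dots> \<le> 4 * M0 + 2 * \<sigma>" using M0 by simp
      finally have c1: "\<sigma>\<^sup>2 / s \<le> 4 * M0 + 2 * \<sigma>" .
      have "\<tau>\<^sup>2 / (2 * \<sigma>\<^sup>2) \<le> s\<^sup>2 / \<sigma>\<^sup>2" unfolding s_def using sig by (simp add: field_simps power2_eq_square)
      then have c2: "exp (- s\<^sup>2 / \<sigma>\<^sup>2) \<le> exp (- \<tau>\<^sup>2 / (2 * \<sigma>\<^sup>2))" by simp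
      have "2 * A = \<sigma>\<^sup>2 / s * exp (- s\<^sup>2 / \<sigma>\<^sup>2)" unfolding A_def using spos by simp
      also have "\<dots> \<le> (4 * M0 + 2 * \<sigma>) * exp (- \<tau>\<^sup>2 / (2 * \<sigma>\<^sup>2))"
        using c1 c2 M0 sig by (intro mult_mono) auto
      finally show ?thesis .
    qed
    ultimately show ?thesis by linarith
  qed
  have absm: "integrable \<mu> (\<lambda>y. \<bar>\<omega> y\<bar>) \<and> (\<integral>y. \<bar>\<omega> y\<bar> \<partial>\<mu>) \<le> 2 * \<sigma>"
  proof (rule sg_bound[OF \<omega>m sg\<omega>])
    show "(\<lambda>y. \<bar>\<omega> y\<bar>) \<in> borel_measurable \<mu>" by measurable
    show "0 \<le> \<bar>\<omega> y\<bar>" for y by simp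
    show "\<bar>\<omega> y\<bar> \<le> \<sigma> * exp ((\<omega> y)\<^sup>2 / \<sigma>\<^sup>2)" for y
    proof -
      have "0 \<le> (\<bar>\<omega> y\<bar> - \<sigma>)\<^sup>2" by simp
      then have "2 * (\<sigma> * \<bar>\<omega> y\<bar>) \<le> \<sigma>\<^sup>2 + (\<omega> y)\<^sup>2"
        by (simp add: power2_eq_square algebra_simps)
      moreover have "0 \<le> \<sigma> * \<bar>\<omega> y\<bar>" using sig by simp
      ultimately have "\<bar>\<omega> y\<bar> * \<sigma> \<le> \<sigma>\<^sup>2 + (\<omega> y)\<^sup>2" by (simp add: mult.commute)
      then have "\<bar>\<omega> y\<bar> \<le> (\<sigma>\<^sup>2 + (\<omega> y)\<^sup>2) / \<sigma>" using sig by (simp add: pos_le_divide_eq)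
      also have "\<dots> = \<sigma> * (1 + (\<omega> y)\<^sup>2 / \<sigma>\<^sup>2)" using sig by (simp add: field_simps power2_eq_square)
      finally have "\<bar>\<omega> y\<bar> \<le> \<sigma> * (1 + (\<omega> y)\<^sup>2 / \<sigma>\<^sup>2)" .
      also have "\<dots> \<le> \<sigma> * exp ((\<omega> y)\<^sup>2 / \<sigma>\<^sup>2)" using sig by (intro mult_left_mono) auto
      finally show ?thesis .
    qed
  qed
  have uint: "integrable \<mu> u"
  proof (rule Bochner_Integration.integrable_bound)
    show "integrable \<mu> (\<lambda>y. \<bar>\<omega> y\<bar> + \<bar>h\<bar>)" using absm by simp
    show "AE y in \<mu>. norm (u y) \<le> norm (\<bar>\<omega> y\<bar> + \<bar>h\<bar>)"
    proof (rule AE_I2)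
      fix y have "\<bar>u y\<bar> \<le> \<bar>\<omega> y\<bar> + \<bar>h\<bar>" using u\<omega>[of y] by linarith
      then show "norm (u y) \<le> norm (\<bar>\<omega> y\<bar> + \<bar>h\<bar>)" by simp
    qed
  qed simp
  have umean: "\<bar>\<integral>y. u y \<partial>\<mu>\<bar> \<le> pbar / 2 * h\<^sup>2"
  proof -
    note mb = mean_bound[OF P S pm pb D, of h]
    define Qy where "Qy y = min (y - f0v - h) 0 - min (y - f0v) 0 + h * indicator {y. y \<le> f0v} y" for y
    have "u y = Qy y + (min (y - f0v) 0 + (- h) * indicator {y. y \<le> f0v} y) + (a * fv - a * g0v)" for y
      unfolding u_def Qy_def h_def by (simp add: algebra_simps)
    then have "(\<integral>y. u y \<partial>\<mu>) = (\<integral>y. Qy y + (min (y - f0v) 0 + (- h) * indicator {y. y \<le> f0v} y) + (a * fv - a * g0v) \<partial>\<mu>)"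
      by simp
    also have "\<dots> = (\<integral>y. Qy y \<partial>\<mu>) + (m + (- h) * a) + (a * fv - a * g0v)"
    proof -
      have Qi: "integrable \<mu> Qy" using mb unfolding Qy_def[abs_def] by simp
      have Ei: "integrable \<mu> (\<lambda>y. min (y - f0v) 0 + (- h) * indicator {y. y \<le> f0v} y)"
        by (rule Bochner_Integration.integrable_add[OF ei indint])
      have E: "(\<integral>y. min (y - f0v) 0 + (- h) * indicator {y. y \<le> f0v} y \<partial>\<mu>) = m + (- h) * a"
        unfolding m_def by (subst Bochner_Integration.integral_add[OF ei indint]) (simp only: indI)
      have "(\<integral>y. Qy y + (min (y - f0v) 0 + (- h) * indicator {y. y \<le> f0v} y) + (a * fv - a * g0v) \<partial>\<mu>)
          = (\<integral>y. Qy y + (min (y - f0v) 0 + (- h) * indicator {y. y \<le> f0v} y) \<partial>\<mu>) + (\<integral>y. (a * fv - a * g0v) \<partial>\<mu>)"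
        by (rule Bochner_Integration.integral_add[OF Bochner_Integration.integrable_add[OF Qi Ei] integrable_const])
      also have "\<dots> = (\<integral>y. Qy y \<partial>\<mu>) + (\<integral>y. min (y - f0v) 0 + (- h) * indicator {y. y \<le> f0v} y \<partial>\<mu>) + (a * fv - a * g0v)"
        by (subst Bochner_Integration.integral_add[OF Qi Ei]) (simp add: prob_space)
      finally show ?thesis unfolding E .
    qed
    also have "\<dots> = (\<integral>y. Qy y \<partial>\<mu>)" unfolding m_eq h_def by (simp add: algebra_simps)
    finally show ?thesis using mb unfolding Qy_def[abs_def] by simp
  qed
  have psiint: "integrable \<mu> (\<lambda>y. psi \<tau> (u y))"
    by (rule integrable_const_bound[where B=\<tau>]) (use psi_abs taupos in auto)
  have psiB: "\<bar>\<integral>y. psi \<tau> (u y) \<partial>\<mu>\<bar> \<le> B"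
  proof -
    have d: "\<bar>u y - psi \<tau> (u y)\<bar> \<le> max 0 (\<bar>\<omega> y\<bar> - s)" for y
    proof -
      have "\<bar>u y - psi \<tau> (u y)\<bar> \<le> max 0 (\<bar>u y\<bar> - \<tau>)" using psi_diff taupos by simp
      moreover have "\<bar>u y\<bar> \<le> \<bar>\<omega> y\<bar> + 2 * M0" using u\<omega>[of y] hb by linarith
      moreover have "2 * M0 - \<tau> \<le> - s" unfolding s_def using tau1 by linarith
      ultimately show ?thesis by linarith
    qed
    have "(\<integral>y. psi \<tau> (u y) \<partial>\<mu>) = (\<integral>y. u y \<partial>\<mu>) - (\<integral>y. u y - psi \<tau> (u y) \<partial>\<mu>)"
      using uint psiint by (simp add: Bochner_Integration.integral_diff)
    moreover have "\<bar>\<integral>y. u y - psi \<tau> (u y) \<partial>\<mu>\<bar> \<le> (\<integral>y. max 0 (\<bar>\<omega> y\<bar> - s) \<partial>\<mu>)"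
    proof -
      have "\<bar>\<integral>y. u y - psi \<tau> (u y) \<partial>\<mu>\<bar> \<le> (\<integral>y. \<bar>u y - psi \<tau> (u y)\<bar> \<partial>\<mu>)"
        using integral_norm_bound[of \<mu> "\<lambda>y. u y - psi \<tau> (u y)"] by simp
      also have "\<dots> \<le> (\<integral>y. max 0 (\<bar>\<omega> y\<bar> - s) \<partial>\<mu>)"
        using bias uint psiint d by (intro integral_mono) auto
      finally show ?thesis .
    qed
    ultimately have "\<bar>\<integral>y. psi \<tau> (u y) \<partial>\<mu>\<bar> \<le> pbar / 2 * h\<^sup>2 + (\<integral>y. max 0 (\<bar>\<omega> y\<bar> - s) \<partial>\<mu>)"
      using umean by linarith
    then show ?thesis unfolding Bdef using bias by linarith
  qed
  have hub_int: "integrable \<mu> (\<lambda>y. huber \<tau> (u y - d))" for d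
  proof (rule Bochner_Integration.integrable_bound)
    show "integrable \<mu> (\<lambda>y. \<tau> * (\<bar>\<omega> y\<bar> + \<bar>h\<bar> + \<bar>d\<bar>))" using absm by simp
    show "AE y in \<mu>. norm (huber \<tau> (u y - d)) \<le> norm (\<tau> * (\<bar>\<omega> y\<bar> + \<bar>h\<bar> + \<bar>d\<bar>))"
    proof (rule AE_I2)
      fix y
      have "huber \<tau> (u y - d) \<le> \<tau> * \<bar>u y - d\<bar>" using huber_le_abs taupos by simp
      also have "\<dots> \<le> \<tau> * (\<bar>\<omega> y\<bar> + \<bar>h\<bar> + \<bar>d\<bar>)" using u\<omega>[of y] taupos by (intro mult_left_mono) auto
      finally show "norm (huber \<tau> (u y - d)) \<le> norm (\<tau> * (\<bar>\<omega> y\<bar> + \<bar>h\<bar> + \<bar>d\<bar>))"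
        using huber_nonneg[of \<tau> "u y - d"] taupos by simp
    qed
  qed simp
  have eqg: "(\<lambda>y. huber \<tau> (min (y - fv) 0 + a * fv - a * gv)) = (\<lambda>y. huber \<tau> (u y - \<delta>))"
    unfolding u_def \<delta>_def by (simp add: algebra_simps)
  have eq0: "(\<lambda>y. huber \<tau> (min (y - fv) 0 + a * fv - a * g0v)) = (\<lambda>y. huber \<tau> (u y - 0))"
    unfolding u_def by simp
  show "integrable \<mu> (\<lambda>y. huber \<tau> (min (y - fv) 0 + a * fv - a * gv))" unfolding eqg by (rule hub_int)
  show "0 \<le> (\<integral>y. huber \<tau> (min (y - fv) 0 + a * fv - a * gv) \<partial>\<mu>)"
    using huber_nonneg taupos by (intro integral_nonneg_AE) auto
  show "(\<integral>y. huber \<tau> (min (y - fv) 0 + a * fv - a * gv) \<partial>\<mu>) \<le> \<tau> * (2 * \<sigma> + 4 * M0)"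
  proof -
    have "(\<integral>y. huber \<tau> (u y - \<delta>) \<partial>\<mu>) \<le> (\<integral>y. \<tau> * (\<bar>\<omega> y\<bar> + \<bar>h\<bar> + \<bar>\<delta>\<bar>) \<partial>\<mu>)"
    proof (rule integral_mono)
      show "integrable \<mu> (\<lambda>y. \<tau> * (\<bar>\<omega> y\<bar> + \<bar>h\<bar> + \<bar>\<delta>\<bar>))" using absm by simp
      fix y
      have "huber \<tau> (u y - \<delta>) \<le> \<tau> * \<bar>u y - \<delta>\<bar>" using huber_le_abs taupos by simp
      also have "\<dots> \<le> \<tau> * (\<bar>\<omega> y\<bar> + \<bar>h\<bar> + \<bar>\<delta>\<bar>)" using u\<omega>[of y] taupos by (intro mult_left_mono) auto
      finally show "huber \<tau> (u y - \<delta>) \<le> \<tau> * (\<bar>\<omega> y\<bar> + \<bar>h\<bar> + \<bar>\<delta>\<bar>)" .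
    qed (rule hub_int)
    also have "\<dots> = \<tau> * ((\<integral>y. \<bar>\<omega> y\<bar> \<partial>\<mu>) + \<bar>h\<bar> + \<bar>\<delta>\<bar>)" using absm by (simp add: prob_space)
    also have "\<dots> \<le> \<tau> * (2 * \<sigma> + 4 * M0)" using absm hb \<delta>b taupos by (intro mult_left_mono) auto
    finally show ?thesis unfolding eqg .
  qed
  define R where "R y = huber \<tau> (u y - \<delta>) - huber \<tau> (u y) + \<delta> * psi \<tau> (u y)" for y
  have Rint: "integrable \<mu> R" unfolding R_def[abs_def] using hub_int[of \<delta>] hub_int[of 0] psiint by simp
  have diff: "(\<integral>y. huber \<tau> (u y - \<delta>) \<partial>\<mu>) - (\<integral>y. huber \<tau> (u y - 0) \<partial>\<mu>) = (\<integral>y. R y \<partial>\<mu>) - \<delta> * (\<integral>y. psi \<tau> (u y) \<partial>\<mu>)"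
    unfolding R_def using hub_int[of \<delta>] hub_int[of 0] psiint by simp
  have Rup: "(\<integral>y. R y \<partial>\<mu>) \<le> \<delta>\<^sup>2 / 2"
  proof -
    have "(\<integral>y. R y \<partial>\<mu>) \<le> (\<integral>y. \<delta>\<^sup>2 / 2 \<partial>\<mu>)"
      using Rint huber_lu[OF taupos] unfolding R_def by (intro integral_mono) auto
    then show ?thesis by simp
  qed
  have Rlow: "\<delta>\<^sup>2 / 4 \<le> (\<integral>y. R y \<partial>\<mu>)"
  proof -
    have ti: "integrable \<mu> (\<lambda>y. \<delta>\<^sup>2 / 2 - \<delta>\<^sup>2 / 2 * indicator {y. \<tau> / 2 < \<bar>\<omega> y\<bar>} y)"
      by (intro Bochner_Integration.integrable_diff integrable_mult_right integrable_real_indicator) (auto simp: less_top[symmetric])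
    have "(\<integral>y. \<delta>\<^sup>2 / 2 - \<delta>\<^sup>2 / 2 * indicator {y. \<tau> / 2 < \<bar>\<omega> y\<bar>} y \<partial>\<mu>) \<le> (\<integral>y. R y \<partial>\<mu>)"
    proof (rule integral_mono[OF ti Rint])
      fix y
      show "\<delta>\<^sup>2 / 2 - \<delta>\<^sup>2 / 2 * indicator {y. \<tau> / 2 < \<bar>\<omega> y\<bar>} y \<le> R y"
      proof (cases "\<tau> / 2 < \<bar>\<omega> y\<bar>")
        case True
        then show ?thesis using huber_lu[OF taupos] unfolding R_def by simp
      next
        case False
        have "\<bar>u y\<bar> \<le> \<tau> - \<bar>\<delta>\<bar>" using False u\<omega>[of y] hb \<delta>b tau1 by linarith
        then show ?thesis using False huber_exact[OF taupos] unfolding R_def by simp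
      qed
    qed
    moreover have "(\<integral>y. \<delta>\<^sup>2 / 2 - \<delta>\<^sup>2 / 2 * indicator {y. \<tau> / 2 < \<bar>\<omega> y\<bar>} y \<partial>\<mu>)
        = \<delta>\<^sup>2 / 2 - \<delta>\<^sup>2 / 2 * measure \<mu> {y. \<tau> / 2 < \<bar>\<omega> y\<bar>}"
      by (subst Bochner_Integration.integral_diff) (auto simp: spU less_top[symmetric] prob_space[unfolded spU] intro!: integrable_real_indicator)
    moreover have "\<delta>\<^sup>2 / 2 * measure \<mu> {y. \<tau> / 2 < \<bar>\<omega> y\<bar>} \<le> \<delta>\<^sup>2 / 2 * (1 / 2)"
      using tail by (intro mult_left_mono) auto
    ultimately show ?thesis by linarith
  qed
  have dpsi: "\<bar>\<delta> * (\<integral>y. psi \<tau> (u y) \<partial>\<mu>)\<bar> \<le> \<bar>\<delta>\<bar> * B"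
    using psiB by (simp add: abs_mult mult_left_mono)
  show "(a * (gv - g0v))\<^sup>2 / 4 - \<bar>a * (gv - g0v)\<bar> * (pbar / 2 * (fv - f0v)\<^sup>2 + (4 * M0 + 2 * \<sigma>) * exp (- \<tau>\<^sup>2 / (2 * \<sigma>\<^sup>2)))
          \<le> (\<integral>y. huber \<tau> (min (y - fv) 0 + a * fv - a * gv) \<partial>\<mu>) - (\<integral>y. huber \<tau> (min (y - fv) 0 + a * fv - a * g0v) \<partial>\<mu>)"
    unfolding eqg eq0 diff using Rlow dpsi unfolding \<delta>_def[symmetric] B_def[symmetric] by linarith
  show "(\<integral>y. huber \<tau> (min (y - fv) 0 + a * fv - a * gv) \<partial>\<mu>) - (\<integral>y. huber \<tau> (min (y - fv) 0 + a * fv - a * g0v) \<partial>\<mu>)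
          \<le> (a * (gv - g0v))\<^sup>2 / 2 + \<bar>a * (gv - g0v)\<bar> * (pbar / 2 * (fv - f0v)\<^sup>2 + (4 * M0 + 2 * \<sigma>) * exp (- \<tau>\<^sup>2 / (2 * \<sigma>\<^sup>2)))"
    unfolding eqg eq0 diff using Rup dpsi unfolding \<delta>_def[symmetric] B_def[symmetric] by linarith
qed
lemma kernel_integral_measurable:
  fixes F :: "'a \<Rightarrow> real \<Rightarrow> real"
  assumes F[measurable]: "(\<lambda>(x, y). F x y) \<in> borel_measurable (M \<Otimes>\<^sub>M borel)"
  assumes L[measurable]: "L \<in> measurable M (subprob_algebra borel)"
  shows "(\<lambda>x. integral\<^sup>L (L x) (F x)) \<in> borel_measurable M"
proof -
  note integral_measurable_subprob_algebra[measurable]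
  note measurable_distr2[measurable]
  have "(\<lambda>x. integral\<^sup>L (distr (L x) (M \<Otimes>\<^sub>M borel) (\<lambda>y. (x, y))) (\<lambda>(x, y). F x y)) \<in> borel_measurable M"
    by measurable
  then show "(\<lambda>x. integral\<^sup>L (L x) (F x)) \<in> borel_measurable M"
    by (rule measurable_cong[THEN iffD1, rotated])
       (simp add: integral_distr subprob_measurableD[OF L])
qed

lemma cauchy_schwarz_int:
  fixes a b :: "'a \<Rightarrow> real"
  assumes ia: "integrable M (\<lambda>x. (a x)\<^sup>2)" and ib: "integrable M (\<lambda>x. (b x)\<^sup>2)"
    and iab: "integrable M (\<lambda>x. \<bar>a x * b x\<bar>)"
  shows "(\<integral>x. \<bar>a x * b x\<bar> \<partial>M) \<le> sqrt (\<integral>x. (a x)\<^sup>2 \<partial>M) * sqrt (\<integral>x. (b x)\<^sup>2 \<partial>M)"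
proof -
  define A where "A = (\<integral>x. (a x)\<^sup>2 \<partial>M)"
  define B where "B = (\<integral>x. (b x)\<^sup>2 \<partial>M)"
  define I where "I = (\<integral>x. \<bar>a x * b x\<bar> \<partial>M)"
  have A0: "0 \<le> A" unfolding A_def by (intro integral_nonneg_AE) auto
  have B0: "0 \<le> B" unfolding B_def by (intro integral_nonneg_AE) auto
  have pw: "\<bar>u * v\<bar> \<le> (t * u\<^sup>2 + v\<^sup>2 / t) / 2" if t: "0 < t" for u v t :: real
  proof -
    have "0 \<le> (t * \<bar>u\<bar> - \<bar>v\<bar>)\<^sup>2" by simp
    then have "2 * t * \<bar>u * v\<bar> \<le> t * t * u\<^sup>2 + v\<^sup>2"
      by (simp add: power2_eq_square algebra_simps abs_mult)
    then have "\<bar>u * v\<bar> \<le> (t * t * u\<^sup>2 + v\<^sup>2) / (2 * t)" using t by (simp add: pos_le_divide_eq mult.commute mult.left_commute)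
    also have "\<dots> = (t * u\<^sup>2 + v\<^sup>2 / t) / 2" using t by (simp add: field_simps power2_eq_square)
    finally show ?thesis .
  qed
  have key: "I \<le> (t * A + B / t) / 2" if t: "0 < t" for t
  proof -
    have "I \<le> (\<integral>x. (t * (a x)\<^sup>2 + (b x)\<^sup>2 / t) / 2 \<partial>M)"
      unfolding I_def using ia ib iab pw[OF t] by (intro integral_mono) auto
    also have "\<dots> = (t * A + B / t) / 2" unfolding A_def B_def using ia ib by simp
    finally show ?thesis .
  qed
  show ?thesis
  proof (cases "0 < A \<and> 0 < B")
    case True
    define t where "t = sqrt B / sqrt A"
    have tpos: "0 < t" unfolding t_def using True by simp
    have "t * A = sqrt B * (A / sqrt A)" unfolding t_def by simp
    also have "\<dots> = sqrt A * sqrt B" using real_div_sqrt[OF A0] by simp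
    finally have "t * A = sqrt A * sqrt B" .
    moreover have "B / t = sqrt A * (B / sqrt B)" unfolding t_def using True by (simp add: field_simps)
    moreover have "B / sqrt B = sqrt B" using real_div_sqrt[OF B0] .
    ultimately show ?thesis using key[OF tpos] unfolding A_def[symmetric] B_def[symmetric] I_def[symmetric] by simp
  next
    case False
    have "I \<le> 0"
    proof (rule ccontr)
      assume "\<not> I \<le> 0"
      then have Ip: "0 < I" by simp
      show False
      proof (cases "A = 0")
        case True
        define t where "t = (B + 1) / I"
        have tp: "0 < t" unfolding t_def using Ip B0 by simp
        have BI: "0 < B * I + I * 2" "0 \<le> B * I" using Ip B0 mult_nonneg_nonneg[OF B0 less_imp_le[OF Ip]] by linarith+
        have "I \<le> B / t / 2" using key[OF tp] True by simp
        also have "\<dots> = B * I / (2 * (B + 1))" unfolding t_def using Ip B0 BI by (simp add: field_simps)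
        also have "\<dots> < I"
        proof -
          have e: "I * (2 * (B + 1)) = 2 * (B * I) + 2 * I" by (simp add: algebra_simps)
          have "B * I < I * (2 * (B + 1))" unfolding e using BI Ip by linarith
          then show ?thesis using B0 by (simp add: pos_divide_less_eq)
        qed
        finally show False by simp
      next
        case False
        then have B: "B = 0" using \<open>\<not> (0 < A \<and> 0 < B)\<close> A0 B0 by linarith
        define t where "t = I / (A + 1)"
        have tp: "0 < t" unfolding t_def using Ip A0 by simp
        have AI: "0 < A * I + I * 2" "0 < I * A + I * 2" "0 \<le> A * I" "0 \<le> I * A" using Ip A0 mult_nonneg_nonneg[OF A0 less_imp_le[OF Ip]] mult_nonneg_nonneg[OF less_imp_le[OF Ip] A0] by linarith+
        have "I \<le> t * A / 2" using key[OF tp] B by simp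
        also have "\<dots> = I * A / (2 * (A + 1))" unfolding t_def using Ip A0 AI by (simp add: field_simps)
        also have "\<dots> < I"
        proof -
          have e: "I * (2 * (A + 1)) = 2 * (I * A) + 2 * I" by (simp add: algebra_simps)
          have "I * A < I * (2 * (A + 1))" unfolding e using AI Ip by linarith
          then show ?thesis using A0 by (simp add: pos_divide_less_eq)
        qed
        finally show False by simp
      qed
    qed
    moreover have "0 \<le> sqrt A * sqrt B" using A0 B0 by simp
    ultimately show ?thesis unfolding I_def A_def B_def by linarith
  qed
qed
lemma powr4: "\<bar>t::real\<bar> powr 4 = (t\<^sup>2)\<^sup>2"
proof -
  have "\<bar>t\<bar> powr 4 = \<bar>t\<bar> ^ 4" by simp
  also have "\<dots> = (\<bar>t\<bar>\<^sup>2)\<^sup>2" by (simp add: power_mult[symmetric])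
  finally show ?thesis by simp
qed
lemma powr2: "\<bar>t::real\<bar> powr 2 = t\<^sup>2" by simp

theorem lemmaA4:
  fixes PX :: "(real ^ 'd) measure"
    and K :: "real ^ 'd \<Rightarrow> real measure"
    and f0 g0 f g :: "real ^ 'd \<Rightarrow> real"
    and \<alpha> pbar \<sigma>0 M0 \<tau> :: real
  assumes PX_prob: "prob_space PX"
    and PX_sets: "sets PX = sets borel"
    and PX_cube: "AE x in PX. x \<in> unit_cube"
    and K_kernel: "K \<in> measurable PX (prob_algebra borel)"
    and alpha: "0 < \<alpha>" "\<alpha> < 1"
    and f0_meas: "f0 \<in> borel_measurable borel"
    and g0_meas: "g0 \<in> borel_measurable borel"
    and f0_quantile: "AE x in PX. measure (K x) {y. y \<le> f0 x} = \<alpha>"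
    and g0_def: "AE x in PX. g0 x = (1 / \<alpha>) * (\<integral>y. y * indicator {y. y \<le> f0 x} y \<partial>K x)"
    and pbar_pos: "0 < pbar"
    and sigma_pos: "0 < \<sigma>0"
    and density: "AE x in PX. \<exists>p :: real \<Rightarrow> real. p \<in> borel_measurable borel
                    \<and> (\<forall>u. 0 \<le> p u \<and> p u \<le> pbar)
                    \<and> distr (K x) borel (\<lambda>y. y - f0 x) = density lborel (\<lambda>u. ennreal (p u))"
    and eps_minus_int: "AE x in PX. integrable (K x) (\<lambda>y. min (y - f0 x) 0)"
    and subgauss: "AE x in PX.
          (\<integral>\<^sup>+ y. ennreal (exp ((min (y - f0 x) 0 - (\<integral>z. min (z - f0 x) 0 \<partial>K x))\<^sup>2 / \<sigma>0\<^sup>2)) \<partial>K x) \<le> 2"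
    and f0_bdd: "\<forall>x\<in>unit_cube. \<bar>f0 x\<bar> \<le> M0"
    and g0_bdd: "\<forall>x\<in>unit_cube. \<bar>g0 x\<bar> \<le> M0"
    and tau: "\<tau> \<ge> 2 * max (4 * M0) (\<sigma>0 * sqrt (ln 4))"
    and f_meas: "f \<in> borel_measurable borel"
    and g_meas: "g \<in> borel_measurable borel"
    and f_bdd: "\<forall>x\<in>unit_cube. \<bar>f x\<bar> \<le> M0"
    and g_bdd: "\<forall>x\<in>unit_cube. \<bar>g x\<bar> \<le> M0"
  shows "(risk PX K \<alpha> \<tau> f g - risk PX K \<alpha> \<tau> f g0
           \<ge> \<alpha>\<^sup>2 / 4 * (Lq_norm PX 2 (\<lambda>x. g x - g0 x))\<^sup>2
             - \<alpha> * Lq_norm PX 2 (\<lambda>x. g x - g0 x)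
               * (pbar / 2 * (Lq_norm PX 4 (\<lambda>x. f x - f0 x))\<^sup>2
                  + (4 * M0 + 2 * \<sigma>0) * exp (- \<tau>\<^sup>2 / (2 * \<sigma>0\<^sup>2))))
         \<and> (risk PX K \<alpha> \<tau> f g - risk PX K \<alpha> \<tau> f g0
           \<le> \<alpha>\<^sup>2 / 2 * (Lq_norm PX 2 (\<lambda>x. g x - g0 x))\<^sup>2
             + \<alpha> * Lq_norm PX 2 (\<lambda>x. g x - g0 x)
               * (pbar / 2 * (Lq_norm PX 4 (\<lambda>x. f x - f0 x))\<^sup>2
                  + (4 * M0 + 2 * \<sigma>0) * exp (- \<tau>\<^sup>2 / (2 * \<sigma>0\<^sup>2))))"
proof -
  interpret px: prob_space PX by (rule PX_prob)
  note PX_sets[measurable_cong]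
  note [measurable] = f0_meas g0_meas f_meas g_meas
  have spX: "space PX = UNIV" using sets_eq_imp_space_eq[OF PX_sets] by simp
  have Ksub[measurable]: "K \<in> PX \<rightarrow>\<^sub>M subprob_algebra borel" by (rule measurable_prob_algebraD[OF K_kernel])
  have Kx: "prob_space (K x) \<and> sets (K x) = sets borel" for x
    using measurable_space[OF K_kernel, of x] by (simp add: spX space_prob_algebra)
  have cube0: "0 \<in> unit_cube" unfolding unit_cube_def by simp
  have M0: "0 \<le> M0" using f0_bdd cube0 by force
  define Ce where "Ce = (4 * M0 + 2 * \<sigma>0) * exp (- \<tau>\<^sup>2 / (2 * \<sigma>0\<^sup>2))"
  have Ce0: "0 \<le> Ce" using M0 sigma_pos by (simp add: Ce_def)
  define C where "C = \<tau> * (2 * \<sigma>0 + 4 * M0)"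
  define Ig where "Ig x = (\<integral>y. huber \<tau> (min (y - f x) 0 + \<alpha> * f x - \<alpha> * g x) \<partial>K x)" for x
  define I0 where "I0 x = (\<integral>y. huber \<tau> (min (y - f x) 0 + \<alpha> * f x - \<alpha> * g0 x) \<partial>K x)" for x
  define d where "d x = g x - g0 x" for x
  define k where "k x = f x - f0 x" for x
  define L where "L x = (\<alpha> * d x)\<^sup>2 / 4 - \<bar>\<alpha> * d x\<bar> * (pbar / 2 * (k x)\<^sup>2 + Ce)" for x
  define U where "U x = (\<alpha> * d x)\<^sup>2 / 2 + \<bar>\<alpha> * d x\<bar> * (pbar / 2 * (k x)\<^sup>2 + Ce)" for x
  have risk_g: "risk PX K \<alpha> \<tau> f g = (\<integral>x. Ig x \<partial>PX)" unfolding risk_def Ig_def Zsur_def by simp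
  have risk_0: "risk PX K \<alpha> \<tau> f g0 = (\<integral>x. I0 x \<partial>PX)" unfolding risk_def I0_def Zsur_def by simp
  have Igm[measurable]: "Ig \<in> borel_measurable PX" unfolding Ig_def[abs_def]
    by (rule kernel_integral_measurable[OF _ Ksub]) measurable
  have I0m[measurable]: "I0 \<in> borel_measurable PX" unfolding I0_def[abs_def]
    by (rule kernel_integral_measurable[OF _ Ksub]) measurable
  have dm[measurable]: "d \<in> borel_measurable PX" unfolding d_def[abs_def] by measurable
  have km[measurable]: "k \<in> borel_measurable PX" unfolding k_def[abs_def] by measurable
  have AEp: "AE x in PX. (0 \<le> Ig x \<and> Ig x \<le> C) \<and> (0 \<le> I0 x \<and> I0 x \<le> C) \<and> L x \<le> Ig x - I0 x \<and> Ig x - I0 x \<le> U x"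
    using PX_cube f0_quantile g0_def density eps_minus_int subgauss
  proof eventually_elim
    case (elim x)
    have bds: "\<bar>f0 x\<bar> \<le> M0" "\<bar>g0 x\<bar> \<le> M0" "\<bar>f x\<bar> \<le> M0" "\<bar>g x\<bar> \<le> M0"
      using elim(1) f0_bdd g0_bdd f_bdd g_bdd by auto
    note H = perx[OF conjunct1[OF Kx] conjunct2[OF Kx] alpha elim(2) elim(3) pbar_pos sigma_pos elim(4) elim(5) elim(6) bds(1) bds(2) bds(3) bds(4) tau]
    note H0 = perx[OF conjunct1[OF Kx] conjunct2[OF Kx] alpha elim(2) elim(3) pbar_pos sigma_pos elim(4) elim(5) elim(6) bds(1) bds(2) bds(3) bds(2) tau]
    show ?case using H(2,3,4,5) H0(2,3) unfolding Ig_def I0_def L_def U_def d_def k_def Ce_def C_def by simp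
  qed
  have Igi: "integrable PX Ig"
  proof (rule px.integrable_const_bound[where B=C])
    show "AE x in PX. norm (Ig x) \<le> C" using AEp by eventually_elim auto
  qed simp
  have I0i: "integrable PX I0"
  proof (rule px.integrable_const_bound[where B=C])
    show "AE x in PX. norm (I0 x) \<le> C" using AEp by eventually_elim auto
  qed simp
  have diff: "risk PX K \<alpha> \<tau> f g - risk PX K \<alpha> \<tau> f g0 = (\<integral>x. Ig x - I0 x \<partial>PX)"
    unfolding risk_g risk_0 using Igi I0i by simp
  have bint: "\<And>(\<phi> :: real ^ 'd \<Rightarrow> real) (Bd :: real). \<phi> \<in> borel_measurable PX \<Longrightarrow> (\<And>x. x \<in> unit_cube \<Longrightarrow> \<bar>\<phi> x\<bar> \<le> Bd) \<Longrightarrow> integrable PX \<phi>"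
  proof -
    fix \<phi> :: "real ^ 'd \<Rightarrow> real" and Bd :: real
    assume m: "\<phi> \<in> borel_measurable PX" and b: "\<And>x. x \<in> unit_cube \<Longrightarrow> \<bar>\<phi> x\<bar> \<le> Bd"
    show "integrable PX \<phi>"
    proof (rule px.integrable_const_bound[where B=Bd])
      show "AE x in PX. norm (\<phi> x) \<le> Bd" using PX_cube by eventually_elim (use b in auto)
    qed (rule m)
  qed
  have db: "\<bar>d x\<bar> \<le> 2 * M0" "\<bar>k x\<bar> \<le> 2 * M0" if "x \<in> unit_cube" for x
  proof -
    have "\<bar>g x\<bar> \<le> M0" "\<bar>g0 x\<bar> \<le> M0" "\<bar>f x\<bar> \<le> M0" "\<bar>f0 x\<bar> \<le> M0"
      using that f0_bdd g0_bdd f_bdd g_bdd by auto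
    then show "\<bar>d x\<bar> \<le> 2 * M0" "\<bar>k x\<bar> \<le> 2 * M0" unfolding d_def k_def by arith+
  qed
  have kk: "(k x)\<^sup>2 \<le> (2 * M0)\<^sup>2" if "x \<in> unit_cube" for x
  proof -
    have "\<bar>k x\<bar>\<^sup>2 \<le> (2 * M0)\<^sup>2" by (rule power_mono[OF db(2)[OF that]]) simp
    then show ?thesis by simp
  qed
  have dd: "(d x)\<^sup>2 \<le> (2 * M0)\<^sup>2" if "x \<in> unit_cube" for x
  proof -
    have "\<bar>d x\<bar>\<^sup>2 \<le> (2 * M0)\<^sup>2" by (rule power_mono[OF db(1)[OF that]]) simp
    then show ?thesis by simp
  qed
  have dd': "\<bar>(d x)\<^sup>2\<bar> \<le> (2 * M0)\<^sup>2" if "x \<in> unit_cube" for x using dd[OF that] by simp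
  have i_d2: "integrable PX (\<lambda>x. (d x)\<^sup>2)" by (rule bint[OF _ dd']) measurable
  have kk': "\<bar>((k x)\<^sup>2)\<^sup>2\<bar> \<le> ((2 * M0)\<^sup>2)\<^sup>2" if x: "x \<in> unit_cube" for x
  proof -
    have "((k x)\<^sup>2)\<^sup>2 \<le> ((2 * M0)\<^sup>2)\<^sup>2" by (rule power_mono[OF kk[OF x]]) simp
    then show ?thesis by simp
  qed
  have i_k4: "integrable PX (\<lambda>x. ((k x)\<^sup>2)\<^sup>2)" by (rule bint[OF _ kk']) measurable
  have dk': "\<bar>\<bar>d x * (k x)\<^sup>2\<bar>\<bar> \<le> 2 * M0 * (2 * M0)\<^sup>2" if x: "x \<in> unit_cube" for x
  proof -
    have "\<bar>d x\<bar> * (k x)\<^sup>2 \<le> 2 * M0 * (2 * M0)\<^sup>2" by (rule mult_mono) (use db(1)[OF x] kk[OF x] M0 in auto)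
    then show ?thesis by (simp add: abs_mult)
  qed
  have i_dk: "integrable PX (\<lambda>x. \<bar>d x * (k x)\<^sup>2\<bar>)" by (rule bint[OF _ dk']) measurable
  have d1': "\<bar>\<bar>d x * 1\<bar>\<bar> \<le> 2 * M0" if "x \<in> unit_cube" for x using db(1)[OF that] by simp
  have i_d1: "integrable PX (\<lambda>x. \<bar>d x * 1\<bar>)" by (rule bint[OF _ d1']) measurable
  define N2 where "N2 = (\<integral>x. (d x)\<^sup>2 \<partial>PX)"
  define N4 where "N4 = (\<integral>x. ((k x)\<^sup>2)\<^sup>2 \<partial>PX)"
  define S1 where "S1 = (\<integral>x. \<bar>d x * (k x)\<^sup>2\<bar> \<partial>PX)"
  define S2 where "S2 = (\<integral>x. \<bar>d x * 1\<bar> \<partial>PX)"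
  have N20: "0 \<le> N2" unfolding N2_def by (intro integral_nonneg_AE) auto
  have N40: "0 \<le> N4" unfolding N4_def by (intro integral_nonneg_AE) auto
  have CS1: "S1 \<le> sqrt N2 * sqrt N4" unfolding S1_def N2_def N4_def
    by (rule cauchy_schwarz_int[OF i_d2 i_k4 i_dk])
  have CS2: "S2 \<le> sqrt N2" using cauchy_schwarz_int[OF i_d2 _ i_d1] unfolding S2_def N2_def by (simp add: px.prob_space)
  have "0 \<le> (\<integral>x. (g x - g0 x)\<^sup>2 \<partial>PX)" by (intro integral_nonneg_AE) auto
  then have Lq2: "Lq_norm PX 2 (\<lambda>x. g x - g0 x) = sqrt N2"
    unfolding Lq_norm_def N2_def d_def powr2 by (simp add: powr_half_sqrt)
  have Lq4: "(Lq_norm PX 4 (\<lambda>x. f x - f0 x))\<^sup>2 = sqrt N4"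
  proof -
    have "Lq_norm PX 4 (\<lambda>x. f x - f0 x) = N4 powr (1/4)" unfolding Lq_norm_def N4_def k_def powr4 by simp
    then have "(Lq_norm PX 4 (\<lambda>x. f x - f0 x))\<^sup>2 = N4 powr (1/4 + 1/4)"
      by (simp only: power2_eq_square powr_add)
    also have "\<dots> = sqrt N4" using N40 by (simp add: powr_half_sqrt)
    finally show ?thesis .
  qed
  have aa: "\<bar>\<alpha>\<bar> = \<alpha>" using alpha by simp
  have Lform: "L x = \<alpha>\<^sup>2 / 4 * (d x)\<^sup>2 - \<alpha> * pbar / 2 * \<bar>d x * (k x)\<^sup>2\<bar> - \<alpha> * Ce * \<bar>d x * 1\<bar>" for x
    unfolding L_def using alpha pbar_pos Ce0 by (simp add: abs_mult aa power_mult_distrib algebra_simps)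
  have Uform: "U x = \<alpha>\<^sup>2 / 2 * (d x)\<^sup>2 + \<alpha> * pbar / 2 * \<bar>d x * (k x)\<^sup>2\<bar> + \<alpha> * Ce * \<bar>d x * 1\<bar>" for x
    unfolding U_def using alpha pbar_pos Ce0 by (simp add: abs_mult aa power_mult_distrib algebra_simps)
  have iL: "integrable PX L" unfolding Lform[abs_def] using i_d2 i_dk i_d1 by simp
  have iU: "integrable PX U" unfolding Uform[abs_def] using i_d2 i_dk i_d1 by simp
  have intL: "(\<integral>x. L x \<partial>PX) = \<alpha>\<^sup>2 / 4 * N2 - \<alpha> * pbar / 2 * S1 - \<alpha> * Ce * S2"
    unfolding Lform[abs_def] N2_def S1_def S2_def using i_d2 i_dk i_d1 by simp
  have intU: "(\<integral>x. U x \<partial>PX) = \<alpha>\<^sup>2 / 2 * N2 + \<alpha> * pbar / 2 * S1 + \<alpha> * Ce * S2"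
    unfolding Uform[abs_def] N2_def S1_def S2_def using i_d2 i_dk i_d1 by simp
  have iD: "integrable PX (\<lambda>x. Ig x - I0 x)" using Igi I0i by simp
  have low: "(\<integral>x. L x \<partial>PX) \<le> (\<integral>x. Ig x - I0 x \<partial>PX)"
    by (rule integral_mono_AE[OF iL iD]) (use AEp in \<open>eventually_elim, auto\<close>)
  have up: "(\<integral>x. Ig x - I0 x \<partial>PX) \<le> (\<integral>x. U x \<partial>PX)"
    by (rule integral_mono_AE[OF iD iU]) (use AEp in \<open>eventually_elim, auto\<close>)
  have a0: "0 \<le> \<alpha> * pbar / 2" "0 \<le> \<alpha> * Ce" using alpha pbar_pos Ce0 by auto
  have m1: "\<alpha> * pbar / 2 * S1 \<le> \<alpha> * pbar / 2 * (sqrt N2 * sqrt N4)" using CS1 a0(1) by (rule mult_left_mono)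
  have m2: "\<alpha> * Ce * S2 \<le> \<alpha> * Ce * sqrt N2" using CS2 a0(2) by (rule mult_left_mono)
  have sq2: "(sqrt N2)\<^sup>2 = N2" using N20 by simp
  have fin: "\<alpha> * sqrt N2 * (pbar / 2 * sqrt N4 + Ce) = \<alpha> * pbar / 2 * (sqrt N2 * sqrt N4) + \<alpha> * Ce * sqrt N2"
    by (simp add: algebra_simps)
  show ?thesis
    unfolding diff Lq2 Lq4 Ce_def[symmetric] sq2
    using low up intL intU m1 m2 fin by (intro conjI) linarith+
qed

end
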